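(* Let $\Sigma$ be a germ at $0$ of a closed subset of $\mathbb{R}^n$ with $0\in\Sigma$, let $r\ge1$ and $n\ge p$, and let $f=(f_1,\dots,f_p)\in\mathcal{E}_{[r]}(n,p)$. The following are equivalent: (1) $f$ satisfies the relative Kuo condition $(K_\Sigma)$: there are $C,\alpha,\bar w>0$ such that $\kappa(df(x))\ge C\,d(x,\Sigma)^{r-1}$ for all $x\in\mathcal{H}^\Sigma_r(f;\bar w)\cap\{\|x\|<\alpha\}$; (2) $f$ satisfies condition $(\widetilde K_\Sigma)$: $d(x,\Sigma)\kappa(df(x))+\|f(x)\|\succsim d(x,\Sigma)^r$ in some neighbourhood of $0$; (3) $d(x,\Sigma)\left(\dfrac{\Gamma(\operatorname{grad}f_1(x),\dots,\operatorname{grad}f_p(x))}{\sum_{j=1}^p\Gamma((\operatorname{grad}f_i(x))_{i\neq j})}\right)^{1/2}+\|f(x)\|\succsim d(x,\Sigma)^r$ in some neighbourhood of $0$; (4) $d(x,\Sigma)\|df^*(x)y\|+\|f(x)\|\succsim d(x,\Sigma)^r$ for $x$ in some neighbourhood of $0$, uniformly in $y\in\mathbb{S}^{p-1}$.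
   Context: $\mathcal{E}_{[s]}(n,p)$ is the set of germs at $0$ of $C^s$ maps $(\mathbb{R}^n,0)\to(\mathbb{R}^p,0)$. $d(x,\Sigma)$ is the distance from $x$ to $\Sigma$. For non-negative functions $\phi,\psi$ near $0$, $\phi\precsim\psi$ (or $\psi\succsim\phi$) means there are $K,\delta>0$ with $\phi\le K\psi$ on the closed ball of radius $\delta$ about $0$. The Kuo distance of vectors $v_1,\dots,v_p\in\mathbb{R}^n$ is $\kappa(v_1,\dots,v_p)=\min_i \operatorname{dist}(v_i,V_i)$, where $V_i$ is the span of the $v_j$, $j\neq i$ (so $\kappa(v)=\|v\|$ when $p=1$); $\kappa(df(x)):=\kappa(\operatorname{grad}f_1(x),\dots,\operatorname{grad}f_p(x))$. The relative horn-neighbourhood is $\mathcal{H}^\Sigma_r(f;\bar w)=\{x:\|f(x)\|\le\bar w\,d(x,\Sigma)^r\}$. $\Gamma(v_1,\dots,v_k)=\det(\langle v_i,v_j\rangle)_{i,j}$ is the Gram determinant (with the Gram determinant of the empty family equal to $1$). $df^*(x):\mathbb{R}^p\to\mathbb{R}^n$ is the adjoint of $df(x)$, i.e. $df^*(x)y=\sum_i y_i\operatorname{grad}f_i(x)$, and $\mathbb{S}^{p-1}$ is the unit sphere of $\mathbb{R}^p$. *)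

theory Defs
  imports "HOL-Analysis.Analysis"
begin

fun Ck_on :: "nat \<Rightarrow> (real^'n) set \<Rightarrow> (real^'n \<Rightarrow> real^'p) \<Rightarrow> bool" where
  "Ck_on 0 U f = continuous_on U f"
| "Ck_on (Suc k) U f =
     (f differentiable_on U \<and>
      (\<forall>j. Ck_on k U (\<lambda>x. frechet_derivative f (at x) (axis j 1))))"

text \<open>Germs at 0 of C^k maps (R^n,0) \<rightarrow> (R^p,0): represented by a map which is C^k on some
  open neighbourhood of 0 and vanishes at 0.\<close>
definition Ck_germ0 :: "nat \<Rightarrow> (real^'n \<Rightarrow> real^'p) \<Rightarrow> bool" where
  "Ck_germ0 k f \<longleftrightarrow> f 0 = 0 \<and> (\<exists>U. open U \<and> 0 \<in> U \<and> Ck_on k U f)"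

definition df :: "(real^'n \<Rightarrow> real^'p) \<Rightarrow> real^'n \<Rightarrow> real^'n \<Rightarrow> real^'p" where
  "df f x = frechet_derivative f (at x)"

definition grad_comp :: "(real^'n \<Rightarrow> real^'p) \<Rightarrow> 'p \<Rightarrow> real^'n \<Rightarrow> real^'n" where
  "grad_comp f i x = (\<chi> j. df f x (axis j 1) $ i)"

definition kuo :: "('p::finite \<Rightarrow> real^'n) \<Rightarrow> real" where
  "kuo v = Min (range (\<lambda>i. infdist (v i) (span (v ` (UNIV - {i})))))"

definition kappa_df :: "(real^'n \<Rightarrow> real^'p) \<Rightarrow> real^'n \<Rightarrow> real" where
  "kappa_df f x = kuo (\<lambda>i. grad_comp f i x)"

text \<open>Gram determinant of the subfamily (v i)_{i \<in> I} (Leibniz formula); empty family gives 1.\<close>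
definition gram :: "('p \<Rightarrow> real^'n) \<Rightarrow> 'p set \<Rightarrow> real" where
  "gram v I = (\<Sum>\<pi> \<in> {\<pi>. \<pi> permutes I}. of_int (sign \<pi>) * (\<Prod>i\<in>I. inner (v i) (v (\<pi> i))))"

definition precsim :: "(real^'n \<Rightarrow> real) \<Rightarrow> (real^'n \<Rightarrow> real) \<Rightarrow> bool" where
  "precsim \<phi> \<psi> \<longleftrightarrow> (\<exists>K \<delta>. K > 0 \<and> \<delta> > 0 \<and> (\<forall>x\<in>cball 0 \<delta>. \<phi> x \<le> K * \<psi> x))"

definition horn :: "(real^'n) set \<Rightarrow> real \<Rightarrow> (real^'n \<Rightarrow> real^'p) \<Rightarrow> real \<Rightarrow> (real^'n) set" where
  "horn \<Sigma> r f w = {x. norm (f x) \<le> w * infdist x \<Sigma> powr r}"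

end

theory Submission
  imports Defs
begin


definition gsum :: "('p \<Rightarrow> 'p \<Rightarrow> real) \<Rightarrow> 'p set \<Rightarrow> real" where
  "gsum A I = (\<Sum>\<pi> \<in> {\<pi>. \<pi> permutes I}. of_int (sign \<pi>) * (\<Prod>i\<in>I. A i (\<pi> i)))"

lemma gsum_cong:
  assumes "\<And>i k. i \<in> I \<Longrightarrow> k \<in> I \<Longrightarrow> A i k = B i k"
  shows "gsum A I = gsum B I"
  unfolding gsum_def
proof (rule sum.cong[OF refl])
  fix \<pi> assume "\<pi> \<in> {\<pi>. \<pi> permutes I}"
  hence p: "\<pi> permutes I" by simp
  have "(\<Prod>i\<in>I. A i (\<pi> i)) = (\<Prod>i\<in>I. B i (\<pi> i))"
    by (rule prod.cong[OF refl]) (use assms permutes_in_image[OF p] in auto)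
  thus "of_int (sign \<pi>) * (\<Prod>i\<in>I. A i (\<pi> i)) = of_int (sign \<pi>) * (\<Prod>i\<in>I. B i (\<pi> i))" by simp
qed

lemma gsum_fix:
  fixes A :: "'p::finite \<Rightarrow> 'p \<Rightarrow> real"
  assumes "S \<subseteq> T" "\<And>i k. i \<in> T - S \<Longrightarrow> k \<in> T \<Longrightarrow> A i k = (if i = k then 1 else 0)"
  shows "gsum A T = gsum A S"
proof -
  have sub: "{\<pi>. \<pi> permutes S} \<subseteq> {\<pi>. \<pi> permutes T}" using assms(1) permutes_subset by blast
  have fin: "finite {\<pi>. \<pi> permutes T}" by (simp add: finite_permutations)
  have z: "\<forall>\<pi>\<in>{\<pi>. \<pi> permutes T} - {\<pi>. \<pi> permutes S}. of_int (sign \<pi>) * (\<Prod>i\<in>T. A i (\<pi> i)) = 0"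
  proof
    fix \<pi> assume that: "\<pi> \<in> {\<pi>. \<pi> permutes T} - {\<pi>. \<pi> permutes S}"
    from that have pT: "\<pi> permutes T" and npS: "\<not> \<pi> permutes S" by auto
    then obtain i where i: "i \<in> T - S" "\<pi> i \<noteq> i" using permutes_superset[OF pT, of S] by blast
    have "\<pi> i \<in> T" using permutes_in_image[OF pT] i by auto
    hence "A i (\<pi> i) = 0" using assms(2)[OF i(1)] i(2) by auto
    hence "(\<Prod>i\<in>T. A i (\<pi> i)) = 0" using i(1) by (intro prod_zero) auto
    thus "of_int (sign \<pi>) * (\<Prod>i\<in>T. A i (\<pi> i)) = 0" by simp
  qed
  have e: "(\<Prod>i\<in>T. A i (\<pi> i)) = (\<Prod>i\<in>S. A i (\<pi> i))" if p: "\<pi> permutes S" for \<pi>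
  proof -
    have "(\<Prod>i\<in>T. A i (\<pi> i)) = (\<Prod>i\<in>T-S. A i (\<pi> i)) * (\<Prod>i\<in>S. A i (\<pi> i))"
      using prod.subset_diff[OF assms(1)] by simp
    also have "(\<Prod>i\<in>T-S. A i (\<pi> i)) = 1"
    proof (rule prod.neutral, rule ballI)
      fix i assume i: "i \<in> T - S"
      hence "\<pi> i = i" using permutes_not_in[OF p] by auto
      thus "A i (\<pi> i) = 1" using assms(2)[OF i] i by auto
    qed
    finally show ?thesis by simp
  qed
  show ?thesis unfolding gsum_def
    by (subst sum.mono_neutral_right[OF fin sub z]) (auto intro!: sum.cong simp: e)
qed

lemma det_gsum: "det (M::real^'p^'p) = gsum (\<lambda>i k. M$i$k) UNIV"
  unfolding det_def gsum_def by simp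

lemma gsum_row:
  fixes A :: "'p::finite \<Rightarrow> 'p \<Rightarrow> real"
  assumes "\<And>k. A j k = (if k = j then c else 0)"
  shows "gsum A UNIV = c * gsum A (UNIV - {j})"
proof -
  define B where "B = (\<lambda>i k. if i = j then (if k = j then 1 else 0) else A i k)"
  have "gsum B UNIV = gsum B (UNIV - {j})"
    by (rule gsum_fix) (auto simp: B_def)
  also have "\<dots> = gsum A (UNIV - {j})"
    by (rule gsum_cong) (auto simp: B_def)
  finally have 1: "gsum B UNIV = gsum A (UNIV - {j})" .
  have "gsum A UNIV = c * gsum B UNIV"
    unfolding gsum_def sum_distrib_left
  proof (rule sum.cong[OF refl])
    fix \<pi> :: "'p \<Rightarrow> 'p"
    have "(\<Prod>i\<in>UNIV. A i (\<pi> i)) = A j (\<pi> j) * (\<Prod>i\<in>UNIV-{j}. A i (\<pi> i))"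
      by (rule prod.remove) auto
    moreover have "(\<Prod>i\<in>UNIV. B i (\<pi> i)) = B j (\<pi> j) * (\<Prod>i\<in>UNIV-{j}. B i (\<pi> i))"
      by (rule prod.remove) auto
    moreover have "(\<Prod>i\<in>UNIV-{j}. B i (\<pi> i)) = (\<Prod>i\<in>UNIV-{j}. A i (\<pi> i))"
      by (rule prod.cong) (auto simp: B_def)
    moreover have "A j (\<pi> j) = c * B j (\<pi> j)" using assms by (simp add: B_def)
    ultimately show "of_int (sign \<pi>) * (\<Prod>i\<in>UNIV. A i (\<pi> i)) = c * (of_int (sign \<pi>) * (\<Prod>i\<in>UNIV. B i (\<pi> i)))"
      by simp
  qed
  with 1 show ?thesis by simp
qed



definition NN :: "('p \<Rightarrow> real^'n) \<Rightarrow> ('p \<Rightarrow> real^'n) \<Rightarrow> 'p set \<Rightarrow> real^'p^'p" where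
  "NN a b I = (\<chi> i k. if i \<in> I \<and> k \<in> I then a i \<bullet> b k else (if i = k then 1 else 0))"

lemma gram_gsum: "gram v I = gsum (\<lambda>i k. v i \<bullet> v k) I"
  unfolding gram_def gsum_def ..

lemma gram_det: "gram (v::'p::finite \<Rightarrow> real^'n) I = det (NN v v I)"
proof -
  have "det (NN v v I) = gsum (\<lambda>i k. NN v v I $i$k) UNIV" by (rule det_gsum)
  also have "\<dots> = gsum (\<lambda>i k. NN v v I $i$k) I"
    by (rule gsum_fix) (auto simp: NN_def)
  also have "\<dots> = gsum (\<lambda>i k. v i \<bullet> v k) I"
    by (rule gsum_cong) (auto simp: NN_def)
  finally show ?thesis by (simp add: gram_gsum)
qed

lemma NN_transpose: "transpose (NN a b I) = NN b a I"
  unfolding NN_def transpose_def by (auto simp: vec_eq_iff inner_commute)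

lemma det_NN_row:
  fixes a b :: "'p::finite \<Rightarrow> real^'n"
  assumes j: "j \<in> I" and t: "t \<in> span (a ` (I - {j}))"
  shows "det (NN (a(j := a j + t)) b I) = det (NN a b I)"
proof -
  let ?A = "NN a b I"
  define x where "x = (\<chi> k. if k \<in> I then t \<bullet> b k else 0)"
  have eq: "NN (a(j := a j + t)) b I = (\<chi> k. if k = j then row j ?A + x else row k ?A)"
    unfolding NN_def x_def row_def using j by (auto simp: vec_eq_iff inner_add_left)
  have fin: "finite (a ` (I - {j}))" by simp
  obtain u where tu: "t = (\<Sum>w\<in>a ` (I - {j}). u w *\<^sub>R w)"
    using t unfolding span_finite[OF fin] by auto
  define c where "c = (\<lambda>w. (\<chi> k. if k \<in> I then w \<bullet> b k else 0) :: real^'p)"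
  have xs: "x = (\<Sum>w\<in>a ` (I - {j}). u w *s c w)"
    unfolding x_def c_def tu
    by (auto simp: vec_eq_iff inner_sum_left sum_component)
  have "x \<in> vec.span {row i ?A |i. i \<noteq> j}"
    unfolding xs
  proof (intro vec.span_sum vec.span_scale vec.span_base)
    fix w assume "w \<in> a ` (I - {j})"
    then obtain i where i: "i \<in> I" "i \<noteq> j" "w = a i" by auto
    have "c w = row i ?A" unfolding c_def row_def NN_def using i(1,2) by (auto simp: vec_eq_iff i(3))
    thus "c w \<in> {row i ?A |i. i \<noteq> j}" using i by blast
  qed
  from det_row_span[OF this] eq show ?thesis by simp
qed

lemma gram_step:
  fixes v :: "'p::finite \<Rightarrow> real^'n"
  assumes j: "j \<in> I"
  shows "gram v I = gram v (I - {j}) * (infdist (v j) (span (v ` (I - {j}))))\<^sup>2"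
proof -
  let ?S = "span (v ` (I - {j}))"
  obtain y z where y: "y \<in> ?S" and orth: "\<And>w. w \<in> ?S \<Longrightarrow> orthogonal z w" and vj: "v j = y + z"
    using orthogonal_subspace_decomp_exists[of "v ` (I - {j})" "v j"] by blast
  define v' where "v' = v(j := z)"
  have v'eq: "v' = v(j := v j + (- y))" unfolding v'_def using vj by simp
  have my: "- y \<in> ?S" using y by (simp add: span_neg)
  have "det (NN v v I) = det (NN v' v I)" unfolding v'eq using det_NN_row[OF j my] by simp
  also have "\<dots> = det (transpose (NN v' v I))" by simp
  also have "\<dots> = det (NN v v' I)" by (simp add: NN_transpose)
  also have "\<dots> = det (NN v' v' I)"
    unfolding v'eq[symmetric] using det_NN_row[OF j my, of v'] v'eq by simp
  finally have d1: "det (NN v v I) = det (NN v' v' I)" .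
  have row: "NN v' v' I $ j $ k = (if k = j then z \<bullet> z else 0)" for k
  proof -
    have "v' k \<in> ?S" if "k \<in> I" "k \<noteq> j"
      using that by (auto simp: v'_def intro: span_base)
    then show ?thesis using orth[of "v' k"] j
      by (auto simp: NN_def v'_def orthogonal_def)
  qed
  have "det (NN v' v' I) = gsum (\<lambda>i k. NN v' v' I $i$k) UNIV" by (rule det_gsum)
  also have "\<dots> = z \<bullet> z * gsum (\<lambda>i k. NN v' v' I $i$k) (UNIV - {j})"
    by (rule gsum_row) (use row in auto)
  also have "gsum (\<lambda>i k. NN v' v' I $i$k) (UNIV - {j}) = gsum (\<lambda>i k. NN v' v' I $i$k) (I - {j})"
    by (rule gsum_fix) (auto simp: NN_def)
  also have "\<dots> = gsum (\<lambda>i k. v i \<bullet> v k) (I - {j})"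
    by (rule gsum_cong) (auto simp: NN_def v'_def)
  finally have d2: "det (NN v' v' I) = z \<bullet> z * gram v (I - {j})" by (simp add: gram_gsum)
  have inf: "infdist (v j) ?S = norm z"
  proof (rule antisym)
    show "infdist (v j) ?S \<le> norm z" using infdist_le[OF y, of "v j"] vj by (simp add: dist_norm)
  next
    have ne: "?S \<noteq> {}" using span_zero by blast
    show "norm z \<le> infdist (v j) ?S"
      unfolding infdist_notempty[OF ne]
    proof (rule cINF_greatest[OF ne])
      fix w assume w: "w \<in> ?S"
      have yw: "y - w \<in> ?S" using y w by (simp add: span_diff)
      have "(norm (z + (y - w)))\<^sup>2 = (norm z)\<^sup>2 + (norm (y - w))\<^sup>2"
        using orth[OF yw] by (rule norm_add_Pythagorean)
      hence "(norm z)\<^sup>2 \<le> (norm (z + (y - w)))\<^sup>2" by simp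
      hence "norm z \<le> norm (z + (y - w))" by (simp add: power_mono_iff)
      moreover have "dist (v j) w = norm (z + (y - w))" using vj by (simp add: dist_norm algebra_simps)
      ultimately show "norm z \<le> dist (v j) w" by simp
    qed
  qed
  show ?thesis using d1 d2 inf gram_det[of v I] by (simp add: power2_norm_eq_inner)
qed

lemma gram_empty: "gram v {} = 1"
  unfolding gram_def by simp

lemma gram_nonneg: "gram (v::'p::finite \<Rightarrow> real^'n) I \<ge> 0"
proof -
  have "finite I" by simp
  thus ?thesis
  proof (induction I rule: finite_induct)
    case empty thus ?case by (simp add: gram_empty)
  next
    case (insert j I)
    have "gram v (insert j I) = gram v I * (infdist (v j) (span (v ` I)))\<^sup>2"
      using gram_step[of j "insert j I" v] insert by simp
    thus ?case using insert by simp
  qed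
qed

lemma gram_zero:
  fixes v :: "'p::finite \<Rightarrow> real^'n"
  shows "gram v I = 0 \<Longrightarrow> \<exists>i\<in>I. infdist (v i) (span (v ` (I - {i}))) = 0"
proof -
  have "finite I" by simp
  thus "gram v I = 0 \<Longrightarrow> ?thesis"
  proof (induction I rule: finite_induct)
    case empty thus ?case by (simp add: gram_empty)
  next
    case (insert j I)
    have "gram v (insert j I) = gram v I * (infdist (v j) (span (v ` I)))\<^sup>2"
      using gram_step[of j "insert j I" v] insert by simp
    with insert.prems have "gram v I = 0 \<or> infdist (v j) (span (v ` I)) = 0" by simp
    thus ?case
    proof
      assume "gram v I = 0"
      then obtain i where i: "i \<in> I" "infdist (v i) (span (v ` (I - {i}))) = 0" using insert.IH by blast
      have "infdist (v i) (span (v ` (insert j I - {i}))) \<le> infdist (v i) (span (v ` (I - {i})))"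
      proof (rule infdist_mono)
        show "span (v ` (I - {i})) \<subseteq> span (v ` (insert j I - {i}))" by (rule span_mono) blast
      qed (use span_zero in blast)
      with i infdist_nonneg show ?case by (metis insertCI order_antisym)
    next
      assume "infdist (v j) (span (v ` I)) = 0"
      thus ?case using insert.hyps by (auto intro!: bexI[of _ j] simp: insert_Diff_if)
    qed
  qed
qed



definition gr :: "('p::finite \<Rightarrow> real^'n) \<Rightarrow> real" where
  "gr v = sqrt (gram v UNIV / (\<Sum>j\<in>UNIV. gram v (UNIV - {j})))"

lemma kuo_le: "kuo v \<le> infdist (v i) (span (v ` (UNIV - {i})))"
  unfolding kuo_def by (rule Min_le) auto

lemma kuo_attained: "\<exists>m. kuo v = infdist (v m) (span (v ` (UNIV - {m})))"
proof -
  have "kuo v \<in> range (\<lambda>i. infdist (v i) (span (v ` (UNIV - {i}))))"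
    unfolding kuo_def by (rule Min_in) auto
  thus ?thesis by auto
qed

lemma kuo_nonneg: "kuo v \<ge> 0"
  using kuo_attained[of v] infdist_nonneg by metis

lemma gr_kuo:
  fixes v :: "'p::finite \<Rightarrow> real^'n"
  shows "gr v \<le> kuo v \<and> kuo v \<le> real CARD('p) * gr v"
proof (cases "gram v UNIV = 0")
  case True
  then obtain i where "infdist (v i) (span (v ` (UNIV - {i}))) = 0" using gram_zero by blast
  hence "kuo v = 0" using kuo_le[of v i] kuo_nonneg[of v] by simp
  thus ?thesis using True by (simp add: gr_def)
next
  case False
  define G where "G = gram v UNIV"
  define Gj where "Gj = (\<lambda>j. gram v (UNIV - {j}))"
  define dd where "dd = (\<lambda>j. infdist (v j) (span (v ` (UNIV - {j}))))"
  define S where "S = sum Gj UNIV"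
  have Gpos: "G > 0" using False gram_nonneg[of v UNIV] unfolding G_def by linarith
  have step: "G = Gj j * (dd j)\<^sup>2" for j unfolding G_def Gj_def dd_def by (rule gram_step) simp
  have Gjnn: "Gj j \<ge> 0" for j unfolding Gj_def by (rule gram_nonneg)
  have Gjpos: "Gj j > 0" for j using step[of j] Gpos Gjnn[of j]
    by (metis less_eq_real_def mult_zero_left)
  have dd2: "(dd j)\<^sup>2 = G / Gj j" for j using step[of j] Gjpos[of j] by (simp add: field_simps)
  have ddnn: "dd j \<ge> 0" for j unfolding dd_def by (rule infdist_nonneg)
  have SGj: "Gj j \<le> S" for j unfolding S_def by (rule member_le_sum) (auto simp: Gjnn)
  have Spos: "S > 0" using SGj[of undefined] Gjpos[of undefined] by linarith
  have gr_eq: "gr v = sqrt (G / S)" unfolding gr_def G_def S_def Gj_def ..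
  have grnn: "gr v \<ge> 0" unfolding gr_eq using Gpos Spos by simp
  obtain m where m: "kuo v = dd m" using kuo_attained[of v] unfolding dd_def by blast
  have k1: "gr v \<le> kuo v"
  proof -
    have "G / S \<le> G / Gj m" using Gpos Gjpos[of m] SGj[of m] by (simp add: frac_le)
    hence "gr v \<le> sqrt ((dd m)\<^sup>2)" unfolding gr_eq dd2 by simp
    thus ?thesis using m ddnn[of m] by simp
  qed
  obtain j0 where j0: "\<And>j. Gj j \<le> Gj j0"
  proof -
    have "Max (range Gj) \<in> range Gj" by (rule Max_in) auto
    then obtain j0 where "Max (range Gj) = Gj j0" by (metis imageE)
    moreover have "Gj j \<le> Max (range Gj)" for j by (rule Max_ge) auto
    ultimately show ?thesis using that by metis
  qed
  define p where "p = real CARD('p)"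
  have p1: "p \<ge> 1" unfolding p_def by simp
  have "S \<le> of_nat (card (UNIV::'p set)) * Gj j0" unfolding S_def
    by (rule sum_bounded_above) (use j0 in auto)
  hence Sle: "S \<le> p * Gj j0" unfolding p_def by simp
  have h1: "G * S \<le> G * (p * Gj j0)" using Sle Gpos by (intro mult_left_mono) auto
  have h2: "G * S \<le> p * (G * Gj j0)" using h1 by (metis mult.left_commute)
  have h3: "G / Gj j0 \<le> p * (G / S)"
    using h2 Spos Gjpos[of j0] by (simp add: divide_le_eq le_divide_eq mult.assoc)
  have h4: "G / S = (gr v)\<^sup>2" unfolding gr_eq using Gpos Spos by simp
  have h5: "p * (gr v)\<^sup>2 \<le> (p * gr v)\<^sup>2"
  proof -
    have "p * (gr v)\<^sup>2 = 1 * (p * (gr v)\<^sup>2)" by simp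
    also have "\<dots> \<le> p * (p * (gr v)\<^sup>2)" using p1 by (intro mult_right_mono) auto
    also have "\<dots> = (p * gr v)\<^sup>2" by (simp add: power_mult_distrib power2_eq_square)
    finally show ?thesis .
  qed
  have h6: "(dd j0)\<^sup>2 \<le> (p * gr v)\<^sup>2" 
  proof -
    have "p * (G / S) = p * (gr v)\<^sup>2" by (simp add: h4)
    thus ?thesis using dd2[of j0] h3 h5 by linarith
  qed
  have "0 \<le> p * gr v" using p1 grnn by simp
  hence "dd j0 \<le> p * gr v" using h6 by (rule power2_le_imp_le[rotated])
  hence "kuo v \<le> p * gr v" using kuo_le[of v j0] unfolding dd_def by linarith
  thus ?thesis using k1 unfolding p_def by blast
qed



lemma adjoint_eq:
  fixes L :: "real^'n \<Rightarrow> real^'p"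
  assumes "linear L"
  shows "adjoint L y = (\<Sum>i\<in>UNIV. y$i *\<^sub>R (\<chi> j. L (axis j 1) $ i))"
proof -
  have "adjoint L = adjoint (\<lambda>x. matrix L *v x)" using matrix_vector_mul(2)[OF assms] by simp
  also have "\<dots> = (\<lambda>x. transpose (matrix L) *v x)" by (rule adjoint_matrix)
  finally show ?thesis
    by (simp add: vec_eq_iff matrix_vector_mult_def transpose_def matrix_def sum_component mult.commute)
qed

lemma infdist_decomp:
  fixes x y z :: "'a::euclidean_space"
  assumes y: "y \<in> span S" and orth: "\<And>w. w \<in> span S \<Longrightarrow> orthogonal z w" and vj: "x = y + z"
  shows "infdist x (span S) = norm z"
proof (rule antisym)
  show "infdist x (span S) \<le> norm z" using infdist_le[OF y, of x] vj by (simp add: dist_norm)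
next
  have ne: "span S \<noteq> {}" using span_zero by blast
  show "norm z \<le> infdist x (span S)"
    unfolding infdist_notempty[OF ne]
  proof (rule cINF_greatest[OF ne])
    fix w assume w: "w \<in> span S"
    have yw: "y - w \<in> span S" using y w by (simp add: span_diff)
    have "(norm (z + (y - w)))\<^sup>2 = (norm z)\<^sup>2 + (norm (y - w))\<^sup>2"
      using orth[OF yw] by (rule norm_add_Pythagorean)
    hence "(norm z)\<^sup>2 \<le> (norm (z + (y - w)))\<^sup>2" by simp
    hence "norm z \<le> norm (z + (y - w))" by (simp add: power_mono_iff)
    moreover have "dist x w = norm (z + (y - w))" using vj by (simp add: dist_norm algebra_simps)
    ultimately show "norm z \<le> dist x w" by simp
  qed
qed

lemma span_repr:
  fixes v :: "'p \<Rightarrow> 'a::real_vector"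
  assumes "finite A" "w \<in> span (v ` A)"
  shows "\<exists>c. w = (\<Sum>k\<in>A. c k *\<^sub>R v k)"
proof -
  let ?T = "{(\<Sum>k\<in>A. c k *\<^sub>R v k) | c. True}"
  have sub: "subspace ?T"
    unfolding subspace_def
  proof (intro conjI ballI allI)
    show "0 \<in> ?T" by (rule CollectI, rule exI[of _ "\<lambda>_. 0"]) simp
  next
    fix x y assume "x \<in> ?T" "y \<in> ?T"
    then obtain c d where "x = (\<Sum>k\<in>A. c k *\<^sub>R v k)" "y = (\<Sum>k\<in>A. d k *\<^sub>R v k)" by blast
    thus "x + y \<in> ?T"
      by (intro CollectI exI[of _ "\<lambda>k. c k + d k"]) (simp add: scaleR_add_left sum.distrib)
  next
    fix a x assume "x \<in> ?T"
    then obtain c where "x = (\<Sum>k\<in>A. c k *\<^sub>R v k)" by blast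
    thus "a *\<^sub>R x \<in> ?T"
      by (intro CollectI exI[of _ "\<lambda>k. a * c k"]) (simp add: scaleR_sum_right)
  qed
  have "v ` A \<subseteq> ?T"
  proof
    fix x assume "x \<in> v ` A"
    then obtain i where i: "i \<in> A" "x = v i" by auto
    have "(\<Sum>k\<in>A. (if k = i then 1 else 0) *\<^sub>R v k) = v i"
      using assms(1) i(1) by (simp add: if_distrib[of "\<lambda>r. r *\<^sub>R _"] sum.delta cong: if_cong)
    thus "x \<in> ?T" using i by (intro CollectI exI[of _ "\<lambda>k. if k = i then 1 else 0"]) simp
  qed
  hence "span (v ` A) \<subseteq> ?T" using sub by (rule span_minimal)
  thus ?thesis using assms(2) by blast
qed

lemma adj_lower:
  fixes v :: "'p::finite \<Rightarrow> real^'n" and y :: "real^'p"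
  assumes ny: "norm y = 1"
  shows "kuo v \<le> real CARD('p) * norm (\<Sum>k\<in>UNIV. y$k *\<^sub>R v k)"
proof -
  define p where "p = real CARD('p)"
  obtain i where imax: "\<And>k. \<bar>y$k\<bar> \<le> \<bar>y$i\<bar>"
  proof -
    have "Max (range (\<lambda>k. \<bar>y$k\<bar>)) \<in> range (\<lambda>k. \<bar>y$k\<bar>)" by (rule Max_in) auto
    then obtain i where "Max (range (\<lambda>k. \<bar>y$k\<bar>)) = \<bar>y$i\<bar>" by (metis imageE)
    moreover have "\<bar>y$k\<bar> \<le> Max (range (\<lambda>k. \<bar>y$k\<bar>))" for k by (rule Max_ge) auto
    ultimately show ?thesis using that by metis
  qed
  have "1 = (norm y)\<^sup>2" using ny by simp
  also have "\<dots> = (\<Sum>k\<in>UNIV. y$k * y$k)" by (simp add: power2_norm_eq_inner inner_vec_def)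
  also have "\<dots> \<le> of_nat (card (UNIV::'p set)) * (y$i * y$i)"
  proof (rule sum_bounded_above)
    fix k
    have "\<bar>y$k\<bar> * \<bar>y$k\<bar> \<le> \<bar>y$i\<bar> * \<bar>y$i\<bar>" using imax[of k] by (intro mult_mono) auto
    thus "y$k * y$k \<le> y$i * y$i" by (simp add: abs_mult[symmetric])
  qed
  finally have pi: "1 \<le> p * (y$i * y$i)" unfolding p_def by simp
  have yi1: "\<bar>y$i\<bar> \<le> 1" using component_le_norm_cart[of y i] ny by simp
  have "y$i * y$i \<le> \<bar>y$i\<bar>"
  proof -
    have "y$i * y$i = \<bar>y$i\<bar> * \<bar>y$i\<bar>" by (simp add: abs_mult[symmetric])
    also have "\<dots> \<le> \<bar>y$i\<bar> * 1" using yi1 by (intro mult_left_mono) auto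
    finally show ?thesis by simp
  qed
  hence p1: "1 \<le> p * \<bar>y$i\<bar>" using pi unfolding p_def by (meson mult_left_mono of_nat_0_le_iff order_trans)
  have yi0: "y$i \<noteq> 0" using pi by auto
  define w where "w = - (\<Sum>k\<in>UNIV-{i}. (y$k / y$i) *\<^sub>R v k)"
  have wS: "w \<in> span (v ` (UNIV - {i}))"
    unfolding w_def by (intro span_neg span_sum span_scale span_base) auto
  have "(\<Sum>k\<in>UNIV. y$k *\<^sub>R v k) = y$i *\<^sub>R v i + (\<Sum>k\<in>UNIV-{i}. y$k *\<^sub>R v k)"
    by (rule sum.remove) auto
  also have "(\<Sum>k\<in>UNIV-{i}. y$k *\<^sub>R v k) = y$i *\<^sub>R (\<Sum>k\<in>UNIV-{i}. (y$k / y$i) *\<^sub>R v k)"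
    using yi0 by (simp add: scaleR_sum_right)
  finally have eq: "(\<Sum>k\<in>UNIV. y$k *\<^sub>R v k) = y$i *\<^sub>R (v i - w)"
    unfolding w_def by (simp add: scaleR_right_distrib)
  have "kuo v \<le> infdist (v i) (span (v ` (UNIV - {i})))" by (rule kuo_le)
  also have "\<dots> \<le> dist (v i) w" by (rule infdist_le[OF wS])
  finally have kd: "kuo v \<le> norm (v i - w)" by (simp add: dist_norm)
  have "kuo v \<le> (p * \<bar>y$i\<bar>) * kuo v" using p1 kuo_nonneg[of v]
    using mult_right_mono[OF p1 kuo_nonneg[of v]] by simp
  also have "\<dots> \<le> (p * \<bar>y$i\<bar>) * norm (v i - w)" using kd p1 by (intro mult_left_mono) auto
  also have "\<dots> = p * norm (\<Sum>k\<in>UNIV. y$k *\<^sub>R v k)" unfolding eq by simp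
  finally show ?thesis unfolding p_def .
qed

lemma adj_upper:
  fixes v :: "'p::finite \<Rightarrow> real^'n"
  shows "\<exists>y::real^'p. norm y = 1 \<and> norm (\<Sum>k\<in>UNIV. y$k *\<^sub>R v k) \<le> kuo v"
proof -
  obtain m where m: "kuo v = infdist (v m) (span (v ` (UNIV - {m})))" using kuo_attained by blast
  obtain w z where w: "w \<in> span (v ` (UNIV - {m}))"
    and orth: "\<And>u. u \<in> span (v ` (UNIV - {m})) \<Longrightarrow> orthogonal z u" and vm: "v m = w + z"
    using orthogonal_subspace_decomp_exists[of "v ` (UNIV - {m})" "v m"] by blast
  have kz: "kuo v = norm z" using m infdist_decomp[OF w orth vm] by simp
  obtain c where c: "w = (\<Sum>k\<in>UNIV-{m}. c k *\<^sub>R v k)" using span_repr[OF _ w] by auto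
  define Y :: "real^'p" where "Y = (\<chi> k. if k = m then 1 else - c k)"
  have "(\<Sum>k\<in>UNIV. Y$k *\<^sub>R v k) = Y$m *\<^sub>R v m + (\<Sum>k\<in>UNIV-{m}. Y$k *\<^sub>R v k)"
    by (rule sum.remove) auto
  also have "(\<Sum>k\<in>UNIV-{m}. Y$k *\<^sub>R v k) = (\<Sum>k\<in>UNIV-{m}. - (c k *\<^sub>R v k))"
    by (rule sum.cong) (auto simp: Y_def)
  finally have eqY: "(\<Sum>k\<in>UNIV. Y$k *\<^sub>R v k) = z"
    using vm c by (simp add: Y_def sum_negf)
  have nY: "norm Y \<ge> 1" using component_le_norm_cart[of Y m] by (simp add: Y_def)
  define y where "y = (1 / norm Y) *\<^sub>R Y"
  have "Y \<noteq> 0" using nY by auto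
  hence ny: "norm y = 1" unfolding y_def by simp
  have "(\<Sum>k\<in>UNIV. y$k *\<^sub>R v k) = (1 / norm Y) *\<^sub>R (\<Sum>k\<in>UNIV. Y$k *\<^sub>R v k)"
    unfolding y_def by (simp add: scaleR_sum_right)
  hence "norm (\<Sum>k\<in>UNIV. y$k *\<^sub>R v k) = norm z / norm Y" using eqY by simp
  also have "\<dots> \<le> norm z" using nY by (simp add: divide_le_eq mult_le_cancel_left1)
  finally show ?thesis using ny kz by auto
qed



lemma gr_nonneg: "gr (v::'p::finite \<Rightarrow> real^'n) \<ge> 0"
  unfolding gr_def using gram_nonneg[of v] by (simp add: sum_nonneg)

lemma precsim_mono:
  fixes d h1 h2 F \<phi> :: "real^'n \<Rightarrow> real"
  assumes P: "precsim \<phi> (\<lambda>x. d x * h1 x + F x)" and e: "\<epsilon> > 0" and c: "c > 0"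
    and le: "\<And>x. x \<in> cball 0 \<epsilon> \<Longrightarrow> h1 x \<le> c * h2 x"
    and h2: "\<And>x. x \<in> cball 0 \<epsilon> \<Longrightarrow> 0 \<le> h2 x"
    and d: "\<And>x. 0 \<le> d x" and F: "\<And>x. 0 \<le> F x"
  shows "precsim \<phi> (\<lambda>x. d x * h2 x + F x)"
proof -
  obtain K \<delta> where K: "K > 0" "\<delta> > 0" and b: "\<And>x. x \<in> cball 0 \<delta> \<Longrightarrow> \<phi> x \<le> K * (d x * h1 x + F x)"
    using P unfolding precsim_def by blast
  define M where "M = max c 1"
  have M: "M \<ge> 1" "c \<le> M" unfolding M_def by auto
  show ?thesis unfolding precsim_def
  proof (rule exI[of _ "K * M"], rule exI[of _ "min \<delta> \<epsilon>"], intro conjI ballI)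
    show "K * M > 0" using K M by simp
    show "min \<delta> \<epsilon> > 0" using K e by simp
    fix x :: "real^'n" assume x: "x \<in> cball 0 (min \<delta> \<epsilon>)"
    hence xd: "x \<in> cball 0 \<delta>" and xe: "x \<in> cball 0 \<epsilon>" by auto
    have "d x * h1 x \<le> d x * (c * h2 x)" using le[OF xe] d[of x] by (rule mult_left_mono)
    also have "\<dots> = c * (d x * h2 x)" by simp
    also have "\<dots> \<le> M * (d x * h2 x)" using M h2[OF xe] d[of x] by (intro mult_right_mono) auto
    finally have 1: "d x * h1 x \<le> M * (d x * h2 x)" .
    have 2: "F x \<le> M * F x" using M F[of x] by (metis mult_le_cancel_right1 order.strict_iff_not)
    have "\<phi> x \<le> K * (d x * h1 x + F x)" by (rule b[OF xd])
    also have "\<dots> \<le> K * (M * (d x * h2 x + F x))" using 1 2 K by (intro mult_left_mono) (auto simp: algebra_simps)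
    finally show "\<phi> x \<le> K * M * (d x * h2 x + F x)" by (simp add: mult.assoc)
  qed
qed



lemma partA:
  fixes \<Sigma> :: "(real^'n) set" and f :: "real^'n \<Rightarrow> real^'p" and r :: real
  assumes Sne: "\<Sigma> \<noteq> {}" and r: "r \<ge> 1"
  shows "(\<exists>C \<alpha> w. C > 0 \<and> \<alpha> > 0 \<and> w > 0 \<and>
            (\<forall>x \<in> horn \<Sigma> r f w \<inter> {x. norm x < \<alpha>}.
               kappa_df f x \<ge> C * infdist x \<Sigma> powr (r - 1)))
       \<longleftrightarrow> precsim (\<lambda>x. infdist x \<Sigma> powr r)
              (\<lambda>x. infdist x \<Sigma> * kappa_df f x + norm (f x))"
proof
  have kn: "kappa_df f x \<ge> 0" for x unfolding kappa_df_def by (rule kuo_nonneg)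
  have split: "infdist x \<Sigma> powr r = infdist x \<Sigma> * infdist x \<Sigma> powr (r - 1)" for x
    using powr_mult_base[OF infdist_nonneg, of x \<Sigma> "r - 1"] by simp
  {
    assume "\<exists>C \<alpha> w. C > 0 \<and> \<alpha> > 0 \<and> w > 0 \<and>
            (\<forall>x \<in> horn \<Sigma> r f w \<inter> {x. norm x < \<alpha>}.
               kappa_df f x \<ge> C * infdist x \<Sigma> powr (r - 1))"
    then obtain C \<alpha> w where C: "C > 0" "\<alpha> > 0" "w > 0"
      and hyp: "\<And>x. x \<in> horn \<Sigma> r f w \<Longrightarrow> norm x < \<alpha> \<Longrightarrow> kappa_df f x \<ge> C * infdist x \<Sigma> powr (r - 1)"
      by blast
    define K where "K = max (1/C) (1/w)"
    have K: "1/C \<le> K" "1/w \<le> K" unfolding K_def by auto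
    hence K: "K > 0" "1/C \<le> K" "1/w \<le> K" using C(1) by (auto intro: order.strict_trans2[of 0 "1/C" K])
    show "precsim (\<lambda>x. infdist x \<Sigma> powr r) (\<lambda>x. infdist x \<Sigma> * kappa_df f x + norm (f x))"
      unfolding precsim_def
    proof (rule exI[of _ K], rule exI[of _ "\<alpha>/2"], intro conjI ballI)
      show "K > 0" "\<alpha>/2 > 0" using K C by auto
      fix x :: "real^'n" assume x: "x \<in> cball 0 (\<alpha>/2)"
      hence nx: "norm x < \<alpha>" using C by auto
      define d where "d = infdist x \<Sigma>"
      have dn: "d \<ge> 0" unfolding d_def by (rule infdist_nonneg)
      have rhs: "0 \<le> K * (d * kappa_df f x + norm (f x))" using K dn kn[of x] by simp
      have "d powr r \<le> K * (d * kappa_df f x + norm (f x))"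
      proof (cases "norm (f x) \<le> w * d powr r")
        case True
        hence "x \<in> horn \<Sigma> r f w" unfolding horn_def d_def by simp
        from hyp[OF this nx] have hk: "C * d powr (r - 1) \<le> kappa_df f x" unfolding d_def .
        have "d powr r = (1/C) * (d * (C * d powr (r - 1)))" unfolding d_def split using C by simp
        also have "\<dots> \<le> (1/C) * (d * kappa_df f x)" using hk dn C by (intro mult_left_mono) auto
        also have "\<dots> \<le> K * (d * kappa_df f x)" using K dn kn[of x] by (intro mult_right_mono) auto
        also have "\<dots> \<le> K * (d * kappa_df f x + norm (f x))" using K by (intro mult_left_mono) auto
        finally show ?thesis .
      next
        case False
        hence "d powr r \<le> (1/w) * norm (f x)" using C by (simp add: field_simps)
        also have "\<dots> \<le> K * norm (f x)" using K by (intro mult_right_mono) auto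
        also have "\<dots> \<le> K * (d * kappa_df f x + norm (f x))" using K dn kn[of x] by (intro mult_left_mono) auto
        finally show ?thesis .
      qed
      thus "infdist x \<Sigma> powr r \<le> K * (infdist x \<Sigma> * kappa_df f x + norm (f x))"
        unfolding d_def .
    qed
  }
  {
    assume "precsim (\<lambda>x. infdist x \<Sigma> powr r) (\<lambda>x. infdist x \<Sigma> * kappa_df f x + norm (f x))"
    then obtain K \<delta> where K: "K > 0" "\<delta> > 0"
      and b: "\<And>x. x \<in> cball 0 \<delta> \<Longrightarrow> infdist x \<Sigma> powr r \<le> K * (infdist x \<Sigma> * kappa_df f x + norm (f x))"
      unfolding precsim_def by blast
    show "\<exists>C \<alpha> w. C > 0 \<and> \<alpha> > 0 \<and> w > 0 \<and>
            (\<forall>x \<in> horn \<Sigma> r f w \<inter> {x. norm x < \<alpha>}.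
               kappa_df f x \<ge> C * infdist x \<Sigma> powr (r - 1))"
    proof (rule exI[of _ "1/(2*K)"], rule exI[of _ \<delta>], rule exI[of _ "1/(2*K)"], intro conjI ballI)
      show "1/(2*K) > 0" "\<delta> > 0" "1/(2*K) > 0" using K by auto
      fix x :: "real^'n" assume x: "x \<in> horn \<Sigma> r f (1/(2*K)) \<inter> {x. norm x < \<delta>}"
      define d where "d = infdist x \<Sigma>"
      have dn: "d \<ge> 0" unfolding d_def by (rule infdist_nonneg)
      have hf: "norm (f x) \<le> (1/(2*K)) * d powr r" using x unfolding horn_def d_def by simp
      have "d powr r \<le> K * (d * kappa_df f x + norm (f x))" using b[of x] x unfolding d_def by auto
      also have "\<dots> \<le> K * (d * kappa_df f x) + K * ((1/(2*K)) * d powr r)"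
      proof -
        have "K * norm (f x) \<le> K * ((1/(2*K)) * d powr r)" using hf K by (intro mult_left_mono) auto
        moreover have "K * (d * kappa_df f x + norm (f x)) = K * (d * kappa_df f x) + K * norm (f x)"
          by (simp add: distrib_left)
        ultimately show ?thesis by linarith
      qed
      also have "K * ((1/(2*K)) * d powr r) = d powr r / 2" using K by simp
      finally have "d powr r \<le> 2 * K * (d * kappa_df f x)" by simp
      hence m: "d * d powr (r - 1) \<le> d * (2 * K * kappa_df f x)" unfolding d_def split by (simp add: ac_simps)
      have "1/(2*K) * d powr (r - 1) \<le> kappa_df f x"
      proof (cases "d = 0")
        case True thus ?thesis using kn[of x] by simp
      next
        case False
        hence "d powr (r - 1) \<le> 2 * K * kappa_df f x" using m dn by simp
        thus ?thesis using K by (simp add: field_simps)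
      qed
      thus "1/(2*K) * infdist x \<Sigma> powr (r - 1) \<le> kappa_df f x" unfolding d_def .
    qed
  }
qed



theorem proposition2p13:
  fixes \<Sigma> :: "(real^'n) set" and f :: "real^'n \<Rightarrow> real^'p" and r :: real
  assumes "closed \<Sigma>" and "0 \<in> \<Sigma>" and "r \<ge> 1" and "CARD('p) \<le> CARD('n)"
    and "Ck_germ0 (nat \<lfloor>r\<rfloor>) f"
  shows "((\<exists>C \<alpha> w. C > 0 \<and> \<alpha> > 0 \<and> w > 0 \<and>
            (\<forall>x \<in> horn \<Sigma> r f w \<inter> {x. norm x < \<alpha>}.
               kappa_df f x \<ge> C * infdist x \<Sigma> powr (r - 1)))
       \<longleftrightarrow> precsim (\<lambda>x. infdist x \<Sigma> powr r)
              (\<lambda>x. infdist x \<Sigma> * kappa_df f x + norm (f x)))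
   \<and> (precsim (\<lambda>x. infdist x \<Sigma> powr r)
              (\<lambda>x. infdist x \<Sigma> * kappa_df f x + norm (f x))
       \<longleftrightarrow> precsim (\<lambda>x. infdist x \<Sigma> powr r)
              (\<lambda>x. infdist x \<Sigma> *
                    sqrt (gram (\<lambda>i. grad_comp f i x) UNIV /
                          (\<Sum>j\<in>UNIV. gram (\<lambda>i. grad_comp f i x) (UNIV - {j})))
                   + norm (f x)))
   \<and> (precsim (\<lambda>x. infdist x \<Sigma> powr r)
              (\<lambda>x. infdist x \<Sigma> * kappa_df f x + norm (f x))
       \<longleftrightarrow> (\<exists>K \<delta>. K > 0 \<and> \<delta> > 0 \<and>
              (\<forall>x\<in>cball 0 \<delta>. \<forall>y::real^'p. norm y = 1 \<longrightarrow>
                 infdist x \<Sigma> powr r \<le>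
                 K * (infdist x \<Sigma> * norm (adjoint (df f x) y) + norm (f x)))))"
  (is "?PA \<and> (?P2 \<longleftrightarrow> ?P3) \<and> (_ \<longleftrightarrow> ?P4)")
proof -
  have Sne: "\<Sigma> \<noteq> {}" using assms(2) by blast
  have A: ?PA by (rule partA[OF Sne assms(3)])
  obtain U where U: "open U" "0 \<in> U" "Ck_on (nat \<lfloor>r\<rfloor>) U f"
    using assms(5) unfolding Ck_germ0_def by blast
  have "nat \<lfloor>r\<rfloor> = Suc (nat \<lfloor>r\<rfloor> - 1)" using assms(3) by linarith
  hence diffU: "f differentiable_on U" using U(3) by (metis Ck_on.simps(2))
  obtain \<epsilon> where e: "\<epsilon> > 0" "cball 0 \<epsilon> \<subseteq> U" using U(1,2) open_contains_cball by blast
  have lin: "linear (df f x)" if x: "x \<in> cball 0 \<epsilon>" for x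
  proof -
    have xU: "x \<in> U" using x e by auto
    have "f differentiable (at x within U)" using diffU xU unfolding differentiable_on_def by blast
    hence "f differentiable (at x)" using at_within_open[OF xU U(1)] by simp
    hence "(f has_derivative df f x) (at x)" unfolding df_def frechet_derivative_works .
    thus ?thesis by (rule has_derivative_linear)
  qed
  have adj: "adjoint (df f x) y = (\<Sum>i\<in>UNIV. y$i *\<^sub>R grad_comp f i x)" if x: "x \<in> cball 0 \<epsilon>" for x y
    using adjoint_eq[OF lin[OF x], of y] unfolding grad_comp_def .
  have kap: "kappa_df f x = kuo (\<lambda>i. grad_comp f i x)" for x by (simp add: kappa_df_def)
  have grq: "sqrt (gram (\<lambda>i. grad_comp f i x) UNIV /
                          (\<Sum>j\<in>UNIV. gram (\<lambda>i. grad_comp f i x) (UNIV - {j})))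
           = gr (\<lambda>i. grad_comp f i x)" for x by (simp add: gr_def)
  have dn: "\<And>x. 0 \<le> infdist x \<Sigma>" by (rule infdist_nonneg)
  have Fn: "\<And>x. 0 \<le> norm (f x)" by simp
  define p where "p = real CARD('p)"
  have p1: "p \<ge> 1" unfolding p_def by simp
  have B: "?P2 \<longleftrightarrow> ?P3"
    unfolding grq
  proof
    assume ?P2
    thus "precsim (\<lambda>x. infdist x \<Sigma> powr r) (\<lambda>x. infdist x \<Sigma> * gr (\<lambda>i. grad_comp f i x) + norm (f x))"
      by (rule precsim_mono[OF _ e(1), where c=p]) (simp_all add: kap gr_kuo gr_nonneg dn p_def)
  next
    assume "precsim (\<lambda>x. infdist x \<Sigma> powr r) (\<lambda>x. infdist x \<Sigma> * gr (\<lambda>i. grad_comp f i x) + norm (f x))"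
    thus ?P2
      by (rule precsim_mono[OF _ e(1), where c=1]) (simp_all add: kap gr_kuo kuo_nonneg dn)
  qed
  have C: "?P2 \<longleftrightarrow> ?P4"
  proof
    assume ?P2
    then obtain K \<delta> where K: "K > 0" "\<delta> > 0"
      and b: "\<And>x. x \<in> cball 0 \<delta> \<Longrightarrow> infdist x \<Sigma> powr r \<le> K * (infdist x \<Sigma> * kappa_df f x + norm (f x))"
      unfolding precsim_def by blast
    show ?P4
    proof (rule exI[of _ "K * p"], rule exI[of _ "min \<delta> \<epsilon>"], intro conjI ballI allI impI)
      show "K * p > 0" "min \<delta> \<epsilon> > 0" using K p1 e by auto
      fix x :: "real^'n" and y :: "real^'p" assume x: "x \<in> cball 0 (min \<delta> \<epsilon>)" and y: "norm y = 1"
      have xd: "x \<in> cball 0 \<delta>" and xe: "x \<in> cball 0 \<epsilon>" using x by auto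
      have ky: "kappa_df f x \<le> p * norm (adjoint (df f x) y)"
        unfolding kap adj[OF xe] p_def by (rule adj_lower[OF y])
      have "infdist x \<Sigma> * kappa_df f x \<le> infdist x \<Sigma> * (p * norm (adjoint (df f x) y))"
        using ky dn[of x] by (rule mult_left_mono)
      also have "\<dots> = p * (infdist x \<Sigma> * norm (adjoint (df f x) y))" by simp
      finally have 1: "infdist x \<Sigma> * kappa_df f x \<le> p * (infdist x \<Sigma> * norm (adjoint (df f x) y))" .
      have 2: "norm (f x) \<le> p * norm (f x)" using mult_right_mono[OF p1 Fn[of x]] by simp
      have "infdist x \<Sigma> powr r \<le> K * (infdist x \<Sigma> * kappa_df f x + norm (f x))" by (rule b[OF xd])
      also have "\<dots> \<le> K * (p * (infdist x \<Sigma> * norm (adjoint (df f x) y) + norm (f x)))"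
      proof (rule mult_left_mono)
        have "infdist x \<Sigma> * kappa_df f x + norm (f x) \<le> p * (infdist x \<Sigma> * norm (adjoint (df f x) y)) + p * norm (f x)"
          by (rule add_mono[OF 1 2])
        thus "infdist x \<Sigma> * kappa_df f x + norm (f x) \<le> p * (infdist x \<Sigma> * norm (adjoint (df f x) y) + norm (f x))"
          by (simp only: distrib_left)
      qed (use K in simp)
      finally show "infdist x \<Sigma> powr r \<le> K * p * (infdist x \<Sigma> * norm (adjoint (df f x) y) + norm (f x))"
        by (simp add: mult.assoc)
    qed
  next
    assume ?P4
    then obtain K \<delta> where K: "K > 0" "\<delta> > 0"
      and b: "\<forall>x\<in>cball 0 \<delta>. \<forall>y::real^'p. norm y = 1 \<longrightarrow>
                infdist x \<Sigma> powr r \<le> K * (infdist x \<Sigma> * norm (adjoint (df f x) y) + norm (f x))"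
      by (elim exE conjE) (rule that)
    show ?P2 unfolding precsim_def
    proof (rule exI[of _ K], rule exI[of _ "min \<delta> \<epsilon>"], intro conjI ballI)
      show "K > 0" "min \<delta> \<epsilon> > 0" using K e by auto
      fix x :: "real^'n" assume x: "x \<in> cball 0 (min \<delta> \<epsilon>)"
      have xd: "x \<in> cball 0 \<delta>" and xe: "x \<in> cball 0 \<epsilon>" using x by auto
      obtain y :: "real^'p" where y: "norm y = 1"
        and yk: "norm (\<Sum>i\<in>UNIV. y$i *\<^sub>R grad_comp f i x) \<le> kuo (\<lambda>i. grad_comp f i x)"
        using adj_upper[of "\<lambda>i. grad_comp f i x"] by (elim exE conjE)
      have ny: "norm (adjoint (df f x) y) \<le> kappa_df f x" using yk unfolding kap adj[OF xe] .
      have "infdist x \<Sigma> powr r \<le> K * (infdist x \<Sigma> * norm (adjoint (df f x) y) + norm (f x))"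
        using b xd y by blast
      also have "\<dots> \<le> K * (infdist x \<Sigma> * kappa_df f x + norm (f x))"
      proof -
        have "infdist x \<Sigma> * norm (adjoint (df f x) y) \<le> infdist x \<Sigma> * kappa_df f x"
          using ny dn[of x] by (rule mult_left_mono)
        hence "infdist x \<Sigma> * norm (adjoint (df f x) y) + norm (f x) \<le> infdist x \<Sigma> * kappa_df f x + norm (f x)"
          by (rule add_right_mono)
        thus ?thesis using K(1) by (rule mult_left_mono[OF _ less_imp_le])
      qed
      finally show "infdist x \<Sigma> powr r \<le> K * (infdist x \<Sigma> * kappa_df f x + norm (f x))" .
    qed
  qed
  show ?thesis using A B C by blast
qed

end
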